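(* Let $\mathfrak h\subseteq\Phi^+$ be a Hessenberg set, let $w,v\in W$ with $v$ a cover of $w$, $v=s_\alpha w$, and suppose $\alpha\in\Delta$ is a simple root. If $\alpha\in N^{\mathfrak h}_v$, then $N^{\mathfrak h}_v=\{\alpha\}\cup s_\alpha N^{\mathfrak h}_w$; if $\alpha\notin N^{\mathfrak h}_v$, then $N^{\mathfrak h}_v=s_\alpha N^{\mathfrak h}_w$.
   Context: $\Phi$ is a crystallographic root system in a real Euclidean space with base $\Delta$, positive roots $\Phi^+$, $\Phi^-=-\Phi^+$, Weyl group $W$ with length $\ell$, and $s_\alpha$ the reflection through $\alpha$. Write $\alpha\prec\beta$ if $\beta-\alpha$ is a sum of positive roots. A Hessenberg set is a subset $\mathfrak h\subseteq\Phi^+$ whose complement in $\Phi^+$ is upward closed for $\prec$. For $w\in W$, $N^{\mathfrak h}_w=\{\beta\in\Phi^+: w^{-1}\beta\in-\mathfrak h\}$. We say $v$ is a cover of $w$ if $v=s_\alpha w$ for some $\alpha\in\Phi^+$ with $v^{-1}\alpha\in\Phi^-$ and $\ell(v)=\ell(w)+1$. *)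

theory Defs
  imports "HOL-Analysis.Analysis"
begin

definition sref :: "'a::euclidean_space \<Rightarrow> 'a \<Rightarrow> 'a" where
  "sref a x = x - ((2 * (x \<bullet> a)) / (a \<bullet> a)) *\<^sub>R a"

definition root_system :: "'a::euclidean_space set \<Rightarrow> bool" where
  "root_system R \<longleftrightarrow>
     finite R \<and> 0 \<notin> R \<and> span R = UNIV \<and>
     (\<forall>a\<in>R. {c *\<^sub>R a | c. c *\<^sub>R a \<in> R} = {a, - a}) \<and>
     (\<forall>a\<in>R. sref a ` R = R) \<and>
     (\<forall>a\<in>R. \<forall>b\<in>R. (2 * (b \<bullet> a)) / (a \<bullet> a) \<in> \<int>)"

definition is_base :: "'a::euclidean_space set \<Rightarrow> 'a set \<Rightarrow> bool" where
  "is_base R D \<longleftrightarrow> D \<subseteq> R \<and> independent D \<and>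
     (\<forall>b\<in>R. \<exists>c :: 'a \<Rightarrow> int. b = (\<Sum>d\<in>D. of_int (c d) *\<^sub>R d) \<and>
              ((\<forall>d\<in>D. c d \<ge> 0) \<or> (\<forall>d\<in>D. c d \<le> 0)))"

definition pos_roots :: "'a::euclidean_space set \<Rightarrow> 'a set \<Rightarrow> 'a set" where
  "pos_roots R D = {b\<in>R. \<exists>c :: 'a \<Rightarrow> int. b = (\<Sum>d\<in>D. of_int (c d) *\<^sub>R d) \<and> (\<forall>d\<in>D. c d \<ge> 0)}"

definition neg_roots :: "'a::euclidean_space set \<Rightarrow> 'a set \<Rightarrow> 'a set" where
  "neg_roots R D = uminus ` pos_roots R D"

inductive_set weyl :: "'a::euclidean_space set \<Rightarrow> ('a \<Rightarrow> 'a) set" for R where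
  weyl_id: "id \<in> weyl R"
| weyl_step: "a \<in> R \<Longrightarrow> w \<in> weyl R \<Longrightarrow> sref a \<circ> w \<in> weyl R"

definition wlen :: "'a::euclidean_space set \<Rightarrow> ('a \<Rightarrow> 'a) \<Rightarrow> nat" where
  "wlen D w = (LEAST n. \<exists>as. set as \<subseteq> D \<and> length as = n \<and> w = foldr (\<lambda>a f. sref a \<circ> f) as id)"

definition root_prec :: "'a::euclidean_space set \<Rightarrow> 'a set \<Rightarrow> 'a \<Rightarrow> 'a \<Rightarrow> bool" where
  "root_prec R D a b \<longleftrightarrow> (\<exists>xs. xs \<noteq> [] \<and> set xs \<subseteq> pos_roots R D \<and> b - a = sum_list xs)"

definition hessenberg :: "'a::euclidean_space set \<Rightarrow> 'a set \<Rightarrow> 'a set \<Rightarrow> bool" where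
  "hessenberg R D h \<longleftrightarrow> h \<subseteq> pos_roots R D \<and>
     (\<forall>b\<in>pos_roots R D - h. \<forall>c\<in>pos_roots R D. root_prec R D b c \<longrightarrow> c \<in> pos_roots R D - h)"

definition N_hess :: "'a::euclidean_space set \<Rightarrow> 'a set \<Rightarrow> 'a set \<Rightarrow> ('a \<Rightarrow> 'a) \<Rightarrow> 'a set" where
  "N_hess R D h w = {b\<in>pos_roots R D. inv w b \<in> uminus ` h}"

definition cover_via :: "'a::euclidean_space set \<Rightarrow> 'a set \<Rightarrow> 'a \<Rightarrow> ('a \<Rightarrow> 'a) \<Rightarrow> ('a \<Rightarrow> 'a) \<Rightarrow> bool" where
  "cover_via R D a w v \<longleftrightarrow> a \<in> pos_roots R D \<and> v = sref a \<circ> w \<and>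
     inv v a \<in> neg_roots R D \<and> wlen D v = wlen D w + 1"

end

theory Submission
  imports Defs
begin

lemma sref_invol: "sref a (sref a x) = x"
proof (cases "a = 0")
  case True then show ?thesis by (simp add: sref_def)
next
  case False
  then have aa: "a \<bullet> a \<noteq> 0" by simp
  have "sref a x \<bullet> a = - (x \<bullet> a)"
    using aa by (simp add: sref_def inner_diff_left algebra_simps)
  then show ?thesis using aa by (simp add: sref_def algebra_simps)
qed

lemma sref_self: "sref a a = - a"
proof (cases "a = 0")
  case True then show ?thesis by (simp add: sref_def)
next
  case False
  then have "a \<bullet> a \<noteq> 0" by simp
  then show ?thesis by (simp add: sref_def scaleR_2)
qed

lemma sref_neg: "sref a (- x) = - sref a x"
  by (simp add: sref_def algebra_simps)

lemma bij_sref: "bij (sref a)"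
  by (metis bijI' sref_invol)

lemma weyl_props: "w \<in> weyl R \<Longrightarrow> bij w \<and> (\<forall>x. w (- x) = - w x)"
proof (induction rule: weyl.induct)
  case weyl_id then show ?case using bij_id unfolding id_def by simp
next
  case (weyl_step a w)
  have b: "bij (sref a \<circ> w)" using bij_comp[OF conjunct1[OF weyl_step.IH] bij_sref] .
  show ?case unfolding comp_def using b[unfolded comp_def] weyl_step.IH by (simp add: sref_neg)
qed

lemma rs_finite: "root_system R \<Longrightarrow> finite R"
  unfolding root_system_def by (elim conjE, assumption)
lemma rs_zero: "root_system R \<Longrightarrow> 0 \<notin> R"
  unfolding root_system_def by (elim conjE, assumption)
lemma rs_red: assumes "root_system R" "a \<in> R" shows "{c *\<^sub>R a | c. c *\<^sub>R a \<in> R} = {a, - a}"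
proof -
  have H: "\<forall>a\<in>R. {c *\<^sub>R a | c. c *\<^sub>R a \<in> R} = {a, - a}"
    using conjunct1[OF conjunct2[OF conjunct2[OF conjunct2[OF assms(1)[unfolded root_system_def]]]]] .
  show ?thesis using bspec[OF H assms(2)] .
qed
lemma rs_refl: "root_system R \<Longrightarrow> a \<in> R \<Longrightarrow> sref a ` R = R"
  unfolding root_system_def by (elim conjE, erule bspec, assumption)
lemma rs_int: assumes "root_system R" "a \<in> R" "b \<in> R" shows "(2 * (b \<bullet> a)) / (a \<bullet> a) \<in> \<int>"
proof -
  have H: "\<forall>a\<in>R. \<forall>b\<in>R. (2 * (b \<bullet> a)) / (a \<bullet> a) \<in> \<int>"
    using conjunct2[OF conjunct2[OF conjunct2[OF conjunct2[OF conjunct2[OF assms(1)[unfolded root_system_def]]]]]] .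
  show ?thesis using bspec[OF bspec[OF H assms(2)] assms(3)] .
qed
lemma bs_sub: "is_base R D \<Longrightarrow> D \<subseteq> R"
  unfolding is_base_def by (elim conjE, assumption)
lemma bs_fin: "root_system R \<Longrightarrow> is_base R D \<Longrightarrow> finite D"
  by (rule finite_subset[OF bs_sub rs_finite])

lemma coeff_unique:
  fixes D :: "'a::euclidean_space set"
  assumes "independent D" "(\<Sum>d\<in>D. of_int (f d) *\<^sub>R d) = (\<Sum>d\<in>D. of_int (g d) *\<^sub>R d)"
    "x \<in> D"
  shows "f x = g x"
proof -
  have H: "\<forall>c. (\<Sum>v\<in>D. c v *\<^sub>R v) = 0 \<longrightarrow> (\<forall>v\<in>D. c v = 0)"
    using conjunct2[OF independent_explicit[THEN iffD1, OF assms(1)]] .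
  have "(\<Sum>d\<in>D. (of_int (f d) - of_int (g d)) *\<^sub>R d) = 0"
    using assms(2) by (simp add: scaleR_diff_left sum_subtractf)
  then have "\<forall>v\<in>D. (of_int (f v) - of_int (g v) :: real) = 0"
    using spec[OF H, of "\<lambda>v. of_int (f v) - of_int (g v)"] by blast
  then show ?thesis using assms(3) by simp
qed

lemma base_sum:
  fixes D :: "'a::euclidean_space set"
  assumes "finite D" "a \<in> D"
  shows "(\<Sum>d\<in>D. of_int (if d = a then k else 0) *\<^sub>R d) = of_int k *\<^sub>R a"
proof -
  have "(\<Sum>d\<in>D. of_int (if d = a then k else 0) *\<^sub>R d) = (\<Sum>d\<in>D. if d = a then of_int k *\<^sub>R d else 0)"
    by (rule sum.cong) auto
  also have "\<dots> = of_int k *\<^sub>R a" using assms by (simp add: sum.delta)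
  finally show ?thesis .
qed

lemma pos_not_neg:
  assumes "root_system R" "is_base R D" "b \<in> pos_roots R D" "- b \<in> pos_roots R D"
  shows False
proof -
  have fin: "finite D" using bs_fin[OF assms(1,2)] .
  have ind: "independent D" using assms(2) unfolding is_base_def by blast
  obtain c where c: "b = (\<Sum>d\<in>D. of_int (c d) *\<^sub>R d)" "\<forall>d\<in>D. c d \<ge> 0"
    using assms(3) unfolding pos_roots_def by blast
  obtain e where e: "- b = (\<Sum>d\<in>D. of_int (e d) *\<^sub>R d)" "\<forall>d\<in>D. e d \<ge> 0"
    using assms(4) unfolding pos_roots_def by blast
  have bm: "b = - (\<Sum>d\<in>D. of_int (e d) *\<^sub>R d)" using e(1) by (metis minus_minus)
  have "b = (\<Sum>d\<in>D. of_int (- e d) *\<^sub>R d)"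
    using bm by (simp add: sum_negf)
  then have eq: "(\<Sum>d\<in>D. of_int (c d) *\<^sub>R d) = (\<Sum>d\<in>D. of_int (- e d) *\<^sub>R d)"
    using c(1) by simp
  have "\<forall>d\<in>D. c d = - e d" by (intro ballI) (rule coeff_unique[OF ind eq])
  then have "\<forall>d\<in>D. c d = 0" using c(2) e(2) by force
  then have "b = 0" using c(1) by simp
  moreover have "b \<in> R" using assms(3) unfolding pos_roots_def by blast
  ultimately show False using rs_zero[OF assms(1)] by simp
qed

lemma simple_pos:
  assumes "root_system R" "is_base R D" "a \<in> D"
  shows "a \<in> pos_roots R D"
proof -
  have fin: "finite D" using bs_fin[OF assms(1,2)] .
  have "a = (\<Sum>d\<in>D. of_int (if d = a then 1 else 0) *\<^sub>R d)"
    using base_sum[OF fin assms(3), of 1] by simp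
  moreover have "a \<in> R" using assms unfolding is_base_def by blast
  ultimately show ?thesis unfolding pos_roots_def
    by (intro CollectI conjI exI[of _ "\<lambda>d. if d = a then 1 else 0"]) auto
qed

lemma sref_perm:
  assumes rs: "root_system R" and bs: "is_base R D" and aD: "a \<in> D"
    and bP: "b \<in> pos_roots R D" and ba: "b \<noteq> a"
  shows "sref a b \<in> pos_roots R D \<and> sref a b \<noteq> a"
proof -
  have fin: "finite D" using bs_fin[OF assms(1,2)] .
  have ind: "independent D" using bs unfolding is_base_def by blast
  have aR: "a \<in> R" using bs aD unfolding is_base_def by blast
  have bR: "b \<in> R" using bP unfolding pos_roots_def by blast
  have aP: "a \<in> pos_roots R D" using simple_pos[OF rs bs aD] .
  have naP: "- a \<notin> pos_roots R D" using pos_not_neg[OF rs bs aP] by blast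
  obtain c where c: "b = (\<Sum>d\<in>D. of_int (c d) *\<^sub>R d)" "\<forall>d\<in>D. c d \<ge> 0"
    using bP unfolding pos_roots_def by blast
  have "(2 * (b \<bullet> a)) / (a \<bullet> a) \<in> \<int>" using rs_int[OF rs aR bR] .
  then obtain m where m: "(2 * (b \<bullet> a)) / (a \<bullet> a) = of_int m" by (rule Ints_cases)
  have sb: "sref a b = b - of_int m *\<^sub>R a" using m by (simp add: sref_def)
  define c' where "c' d = c d - (if d = a then m else 0)" for d
  have "(\<Sum>d\<in>D. of_int (c' d) *\<^sub>R d) = b - of_int m *\<^sub>R a"
    unfolding c'_def
    by (simp add: c(1) scaleR_diff_left sum_subtractf base_sum[OF fin aD])
  then have sbc: "sref a b = (\<Sum>d\<in>D. of_int (c' d) *\<^sub>R d)" using sb by simp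
  have sR: "sref a b \<in> R" using rs_refl[OF rs aR] bR by blast
  obtain e where e: "sref a b = (\<Sum>d\<in>D. of_int (e d) *\<^sub>R d)"
      "(\<forall>d\<in>D. e d \<ge> 0) \<or> (\<forall>d\<in>D. e d \<le> 0)"
    using bs sR unfolding is_base_def by blast
  have eqs: "(\<Sum>d\<in>D. of_int (e d) *\<^sub>R d) = (\<Sum>d\<in>D. of_int (c' d) *\<^sub>R d)"
    using e(1) sbc by simp
  have ec: "\<forall>d\<in>D. e d = c' d" using coeff_unique[OF ind eqs] by blast
  have "\<exists>d0\<in>D. d0 \<noteq> a \<and> c d0 > 0"
  proof (rule ccontr)
    assume "\<not> ?thesis"
    then have z: "\<forall>d\<in>D. d \<noteq> a \<longrightarrow> c d = 0" using c(2) by force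
    have "b = (\<Sum>d\<in>D. of_int (if d = a then c a else 0) *\<^sub>R d)"
      unfolding c(1) by (rule sum.cong) (auto simp: z)
    then have "b = of_int (c a) *\<^sub>R a" using base_sum[OF fin aD] by simp
    then have "b \<in> {x *\<^sub>R a | x. x *\<^sub>R a \<in> R}" using bR by blast
    then have "b \<in> {a, - a}" unfolding rs_red[OF rs aR] .
    then show False using ba naP bP by blast
  qed
  then obtain d0 where d0: "d0 \<in> D" "d0 \<noteq> a" "c d0 > 0" by blast
  have "e d0 > 0" using ec d0 by (simp add: c'_def)
  then have "\<forall>d\<in>D. e d \<ge> 0" using e(2) d0(1) by force
  then have "sref a b \<in> pos_roots R D" using e(1) sR unfolding pos_roots_def by blast
  moreover have "sref a b \<noteq> a"
  proof
    assume "sref a b = a"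
    then have "b = sref a a" by (metis sref_invol)
    also have "sref a a = - a" by (rule sref_self)
    finally show False using bP naP by simp
  qed
  ultimately show ?thesis by blast
qed

theorem corollary2p10:
  fixes R D h :: "'a::euclidean_space set" and w v :: "'a \<Rightarrow> 'a" and a :: 'a
  assumes "root_system R" and "is_base R D" and "hessenberg R D h"
    and "w \<in> weyl R" and "v \<in> weyl R"
    and "cover_via R D a w v" and "a \<in> D"
  shows "(a \<in> N_hess R D h v \<longrightarrow> N_hess R D h v = insert a (sref a ` N_hess R D h w)) \<and>
         (a \<notin> N_hess R D h v \<longrightarrow> N_hess R D h v = sref a ` N_hess R D h w)"
proof -
  let ?P = "pos_roots R D"
  let ?s = "sref a"
  have rs: "root_system R" and bs: "is_base R D" and aD: "a \<in> D" using assms by auto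
  have aR: "a \<in> R" using bs aD unfolding is_base_def by blast
  have hP: "h \<subseteq> ?P" using assms(3) unfolding hessenberg_def by blast
  have wb: "bij w" and wneg: "\<And>x. w (- x) = - w x" using weyl_props[OF assms(4)] by auto
  have v: "v = ?s \<circ> w" using assms(6) unfolding cover_via_def by blast
  have invs: "inv ?s = ?s"
    by (rule inv_unique_comp) (auto simp: sref_invol fun_eq_iff)
  have invv: "inv v = inv w \<circ> ?s"
    by (simp add: v o_inv_distrib[OF bij_sref wb] invs)
  have saa: "?s a = - a" by (rule sref_self)
  have invneg: "inv w (- y) = - inv w y" for y
  proof -
    have "w (inv w y) = y" using wb by (simp add: bij_is_surj surj_f_inv_f)
    then have "w (- inv w y) = - y" using wneg by simp
    then have "inv w (w (- inv w y)) = inv w (- y)" by simp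
    then show ?thesis using inv_f_f[OF bij_is_inj[OF wb]] by simp
  qed
  have aNw: "a \<notin> N_hess R D h w"
  proof
    assume "a \<in> N_hess R D h w"
    then obtain x where x: "x \<in> h" "inv w a = - x" unfolding N_hess_def by blast
    have "inv v a = x" using invv saa invneg x(2) by simp
    moreover obtain p where p: "p \<in> ?P" "inv v a = - p"
      using assms(6) unfolding cover_via_def neg_roots_def by blast
    ultimately have "- p \<in> ?P" using x(1) hP by auto
    then show False using pos_not_neg[OF rs bs p(1)] by blast
  qed
  have NwP: "N_hess R D h w \<subseteq> ?P" unfolding N_hess_def by blast
  have sub1: "?s ` N_hess R D h w \<subseteq> ?P - {a}"
  proof
    fix y assume "y \<in> ?s ` N_hess R D h w"
    then obtain c where c: "c \<in> N_hess R D h w" "y = ?s c" by blast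
    have "c \<in> ?P" "c \<noteq> a" using c(1) NwP aNw by auto
    then show "y \<in> ?P - {a}" using sref_perm[OF rs bs aD] c(2) by simp
  qed
  have key: "b \<in> N_hess R D h v \<longleftrightarrow> b \<in> ?s ` N_hess R D h w" if "b \<in> ?P" "b \<noteq> a" for b
  proof
    assume "b \<in> N_hess R D h v"
    then have "inv w (?s b) \<in> uminus ` h" using invv unfolding N_hess_def by auto
    moreover have "?s b \<in> ?P" using sref_perm[OF rs bs aD that] by blast
    ultimately have "?s b \<in> N_hess R D h w" unfolding N_hess_def by blast
    then show "b \<in> ?s ` N_hess R D h w" by (metis image_eqI sref_invol)
  next
    assume "b \<in> ?s ` N_hess R D h w"
    then obtain c where c: "c \<in> N_hess R D h w" "b = ?s c" by blast
    then have "inv v b \<in> uminus ` h" using invv unfolding N_hess_def by (auto simp: sref_invol)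
    then show "b \<in> N_hess R D h v" using that unfolding N_hess_def by blast
  qed
  have NvP: "N_hess R D h v \<subseteq> ?P" unfolding N_hess_def by blast
  have aS: "a \<notin> ?s ` N_hess R D h w" using sub1 by blast
  have gen: "b \<in> N_hess R D h v \<longleftrightarrow> b \<in> ?s ` N_hess R D h w" if "b \<noteq> a" for b
  proof (cases "b \<in> ?P")
    case True then show ?thesis using key[OF True that] by simp
  next
    case False
    have "b \<notin> N_hess R D h v" using False NvP by blast
    moreover have "b \<notin> ?s ` N_hess R D h w" using False sub1 by blast
    ultimately show ?thesis by simp
  qed
  show ?thesis
  proof (intro conjI impI)
    assume aN: "a \<in> N_hess R D h v"
    show "N_hess R D h v = insert a (?s ` N_hess R D h w)"
    proof (rule set_eqI)
      fix b show "b \<in> N_hess R D h v \<longleftrightarrow> b \<in> insert a (?s ` N_hess R D h w)"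
        using aN gen[of b] by (cases "b = a") simp_all
    qed
  next
    assume aN: "a \<notin> N_hess R D h v"
    show "N_hess R D h v = ?s ` N_hess R D h w"
    proof (rule set_eqI)
      fix b show "b \<in> N_hess R D h v \<longleftrightarrow> b \<in> ?s ` N_hess R D h w"
        using aN aS gen[of b] by (cases "b = a") simp_all
    qed
  qed
qed

end
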